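(* In the Heisenberg–Weyl algebra $\mathcal A$, for all integers $0\le k\le n$ one has $q^{k}p^{n}q^{n-k} = p^{n-k}q^{n}p^{k}$.
   Context: $\mathcal{A}$ denotes the quotient of the free associative $\mathbb{C}$-algebra on two noncommuting generators $p,q$ by the two-sided ideal generated by $qp-pq-\imath$, where $\imath=\sqrt{-1}$. *)

theory Defs
  imports Complex_Main
begin

text \<open>Free associative C-algebra on two generators: finitely supported
  functions from words (bool lists; False = p, True = q) to complex numbers,
  with concatenation-convolution product.\<close>

type_synonym fa = "bool list \<Rightarrow> complex"

definition fin_supp :: "fa \<Rightarrow> bool" where
  "fin_supp f \<longleftrightarrow> finite {w. f w \<noteq> 0}"

definition fa_add :: "fa \<Rightarrow> fa \<Rightarrow> fa" where
  "fa_add f g = (\<lambda>w. f w + g w)"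

definition fa_sub :: "fa \<Rightarrow> fa \<Rightarrow> fa" where
  "fa_sub f g = (\<lambda>w. f w - g w)"

definition fa_smult :: "complex \<Rightarrow> fa \<Rightarrow> fa" where
  "fa_smult c f = (\<lambda>w. c * f w)"

definition fa_mult :: "fa \<Rightarrow> fa \<Rightarrow> fa" where
  "fa_mult f g = (\<lambda>w. \<Sum>i\<le>length w. f (take i w) * g (drop i w))"

definition word :: "bool list \<Rightarrow> fa" where
  "word u = (\<lambda>w. if w = u then 1 else 0)"

definition fa_one :: fa where "fa_one = word []"

definition fa_pow :: "fa \<Rightarrow> nat \<Rightarrow> fa" where
  "fa_pow f n = ((fa_mult f) ^^ n) fa_one"

definition gen_p :: fa where "gen_p = word [False]"
definition gen_q :: fa where "gen_q = word [True]"

definition hw_rel :: fa where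
  "hw_rel = fa_sub (fa_sub (fa_mult gen_q gen_p) (fa_mult gen_p gen_q)) (fa_smult \<i> fa_one)"

inductive_set hw_ideal :: "fa set" where
  gen: "hw_rel \<in> hw_ideal"
| zero: "(\<lambda>w. 0) \<in> hw_ideal"
| add: "x \<in> hw_ideal \<Longrightarrow> y \<in> hw_ideal \<Longrightarrow> fa_add x y \<in> hw_ideal"
| lmult: "fin_supp a \<Longrightarrow> x \<in> hw_ideal \<Longrightarrow> fa_mult a x \<in> hw_ideal"
| rmult: "fin_supp a \<Longrightarrow> x \<in> hw_ideal \<Longrightarrow> fa_mult x a \<in> hw_ideal"

definition hw_eq :: "fa \<Rightarrow> fa \<Rightarrow> bool" where
  "hw_eq x y \<longleftrightarrow> fa_sub x y \<in> hw_ideal"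

end

theory Submission
  imports Defs
begin


inductive_set Pol :: "'a::{ring,monoid_mult} \<Rightarrow> 'a \<Rightarrow> 'a set" for D c where
  D: "D \<in> Pol D c"
| C: "c \<in> Pol D c"
| one: "1 \<in> Pol D c"
| add: "x \<in> Pol D c \<Longrightarrow> y \<in> Pol D c \<Longrightarrow> x + y \<in> Pol D c"
| sub: "x \<in> Pol D c \<Longrightarrow> y \<in> Pol D c \<Longrightarrow> x - y \<in> Pol D c"
| mult: "x \<in> Pol D c \<Longrightarrow> y \<in> Pol D c \<Longrightarrow> x * y \<in> Pol D c"

lemma Pol_comm_gen:
  fixes D c :: "'a::{ring,monoid_mult}"
  assumes "D * c = c * D"
  shows "x \<in> Pol D c \<Longrightarrow> x * D = D * x \<and> x * c = c * x"
proof (induction rule: Pol.induct)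
  case (mult x y)
  then show ?case by (metis mult.assoc)
qed (auto simp: assms algebra_simps)

lemma Pol_comm:
  fixes D c :: "'a::{ring,monoid_mult}"
  assumes "D * c = c * D"
  shows "x \<in> Pol D c \<Longrightarrow> y \<in> Pol D c \<Longrightarrow> x * y = y * x"
proof (induction rule: Pol.induct)
  case D then show ?case using Pol_comm_gen[OF assms] by metis
next
  case C then show ?case using Pol_comm_gen[OF assms] by metis
next
  case (mult x1 x2) then show ?case by (metis mult.assoc)
qed (auto simp: algebra_simps)

lemma Pol_shift:
  fixes D c s t :: "'a::{ring,monoid_mult}"
  assumes "s * D = t * s" "t \<in> Pol D c" "s * c = c * s"
  shows "x \<in> Pol D c \<Longrightarrow> \<exists>y\<in>Pol D c. s * x = y * s"
proof (induction rule: Pol.induct)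
  case D then show ?case using assms by blast
next
  case C then show ?case using assms Pol.C by blast
next
  case one then show ?case using Pol.one by force
next
  case (add x1 x2)
  then obtain y1 y2 where "y1 \<in> Pol D c" "y2 \<in> Pol D c" "s * x1 = y1 * s" "s * x2 = y2 * s" by blast
  then show ?case by (intro bexI[of _ "y1 + y2"]) (auto simp: algebra_simps intro: Pol.add)
next
  case (sub x1 x2)
  then obtain y1 y2 where "y1 \<in> Pol D c" "y2 \<in> Pol D c" "s * x1 = y1 * s" "s * x2 = y2 * s" by blast
  then show ?case by (intro bexI[of _ "y1 - y2"]) (auto simp: algebra_simps intro: Pol.sub)
next
  case (mult x1 x2)
  then obtain y1 y2 where "y1 \<in> Pol D c" "y2 \<in> Pol D c" "s * x1 = y1 * s" "s * x2 = y2 * s" by blast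
  then show ?case by (intro bexI[of _ "y1 * y2"]) (auto intro: Pol.mult, metis mult.assoc)
qed

lemma weyl_abstract:
  fixes p q c :: "'a::{ring,monoid_mult}"
  assumes rel: "q * p - p * q = c" and cp: "c * p = p * c" and cq: "c * q = q * c"
    and kn: "k \<le> n"
  shows "q ^ k * p ^ n * q ^ (n - k) = p ^ (n - k) * q ^ n * p ^ k"
proof -
  define D where "D = p * q"
  have qp: "q * p = D + c" using rel unfolding D_def by (simp add: algebra_simps)
  have Dc: "D * c = c * D" unfolding D_def using cp cq by (metis mult.assoc)
  have qD: "q * D = (D + c) * q" using qp unfolding D_def by (metis mult.assoc)
  have pD: "p * D = (D - c) * p"
  proof -
    have "(D - c) * p = p * q * p - c * p" by (simp add: D_def algebra_simps)
    also have "\<dots> = p * (q * p - c)" using cp by (simp add: algebra_simps mult.assoc)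
    also have "\<dots> = p * D" using qp by simp
    finally show ?thesis by simp
  qed
  have DcP: "D + c \<in> Pol D c" "D - c \<in> Pol D c" by (auto intro: Pol.intros)
  have X: "q ^ j * p ^ j \<in> Pol D c" for j
  proof (induction j)
    case 0 then show ?case by (simp add: Pol.one)
  next
    case (Suc j)
    then obtain y where y: "y \<in> Pol D c" "q * (q ^ j * p ^ j) = y * q"
      using Pol_shift[OF qD DcP(1) cq[symmetric]] by blast
    have "q ^ Suc j * p ^ Suc j = q * (q ^ j * p ^ j) * p"
      by (simp add: power_commutes mult.assoc)
    also have "\<dots> = y * (D + c)" using y qp by (simp add: mult.assoc)
    finally show ?case using y DcP by (simp add: Pol.mult)
  qed
  have Y: "p ^ j * q ^ j \<in> Pol D c" for j
  proof (induction j)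
    case 0 then show ?case by (simp add: Pol.one)
  next
    case (Suc j)
    then obtain y where y: "y \<in> Pol D c" "p * (p ^ j * q ^ j) = y * p"
      using Pol_shift[OF pD DcP(2) cp[symmetric]] by blast
    have "p ^ Suc j * q ^ Suc j = p * (p ^ j * q ^ j) * q"
      by (simp add: power_commutes mult.assoc)
    also have "\<dots> = y * D" using y by (simp add: mult.assoc D_def)
    finally show ?case using y by (simp add: Pol.mult Pol.D)
  qed
  obtain m where n: "n = k + m" using kn le_Suc_ex by blast
  have "q ^ k * p ^ n * q ^ (n - k) = (q ^ k * p ^ k) * (p ^ m * q ^ m)"
    by (simp add: n power_add mult.assoc)
  also have "\<dots> = (p ^ m * q ^ m) * (q ^ k * p ^ k)"
    by (rule Pol_comm[OF Dc X Y])
  also have "\<dots> = p ^ m * (q ^ m * q ^ k) * p ^ k"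
    by (simp add: mult.assoc)
  also have "\<dots> = p ^ (n - k) * q ^ n * p ^ k"
    by (simp add: n power_add[symmetric] add.commute)
  finally show ?thesis .
qed



lemma tri_swap: fixes n :: nat and G :: "nat \<Rightarrow> nat \<Rightarrow> complex" shows "(\<Sum>i\<le>n. \<Sum>j\<le>i. G j i) = (\<Sum>j\<le>n. \<Sum>i=j..n. (G j i :: complex))"
proof (induction n)
  case 0 then show ?case by simp
next
  case (Suc n)
  have "(\<Sum>j\<le>Suc n. \<Sum>i=j..Suc n. G j i) = (\<Sum>j\<le>n. \<Sum>i=j..Suc n. G j i) + G (Suc n) (Suc n)"
    by simp
  also have "(\<Sum>j\<le>n. \<Sum>i=j..Suc n. G j i) = (\<Sum>j\<le>n. (\<Sum>i=j..n. G j i) + G j (Suc n))"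
    by (rule sum.cong) auto
  finally show ?case using Suc by (simp add: sum.distrib)
qed

lemma fa_mult_assoc: "fa_mult (fa_mult f g) h = fa_mult f (fa_mult g h)"
proof
  fix w :: "bool list"
  let ?n = "length w"
  let ?G = "\<lambda>j i. f (take j w) * g (drop j (take i w)) * h (drop i w)"
  have L: "fa_mult (fa_mult f g) h w = (\<Sum>i\<le>?n. \<Sum>j\<le>i. ?G j i)"
    unfolding fa_mult_def
    by (rule sum.cong) (auto simp: sum_distrib_right min_def)
  have R: "fa_mult f (fa_mult g h) w = (\<Sum>j\<le>?n. \<Sum>i=j..?n. ?G j i)"
    unfolding fa_mult_def
  proof (rule sum.cong[OF refl])
    fix j assume j: "j \<in> {..?n}"
    have "(\<Sum>i=j..?n. ?G j i) = (\<Sum>i=0+j..(?n-j)+j. ?G j i)" using j by simp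
    also have "\<dots> = (\<Sum>l=0..?n-j. ?G j (l+j))" by (rule sum.shift_bounds_cl_nat_ivl)
    also have "\<dots> = (\<Sum>l\<le>?n-j. f (take j w) * (g (take l (drop j w)) * h (drop l (drop j w))))"
      by (rule sum.cong) (auto simp: take_drop add.commute mult.assoc)
    finally show "f (take j w) * (\<Sum>l\<le>length (drop j w). g (take l (drop j w)) * h (drop l (drop j w))) = (\<Sum>i=j..?n. ?G j i)"
      by (simp add: sum_distrib_left)
  qed
  show "fa_mult (fa_mult f g) h w = fa_mult f (fa_mult g h) w"
    using L R tri_swap[of ?G ?n] by simp
qed

lemma fa_mult_add_left: "fa_mult (fa_add f g) h = fa_add (fa_mult f h) (fa_mult g h)"
  by (auto simp: fa_mult_def fa_add_def sum.distrib algebra_simps)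
lemma fa_mult_add_right: "fa_mult h (fa_add f g) = fa_add (fa_mult h f) (fa_mult h g)"
  by (auto simp: fa_mult_def fa_add_def sum.distrib algebra_simps)
lemma fa_mult_sub_left: "fa_mult (fa_sub f g) h = fa_sub (fa_mult f h) (fa_mult g h)"
  by (auto simp: fa_mult_def fa_sub_def sum_subtractf algebra_simps)
lemma fa_mult_sub_right: "fa_mult h (fa_sub f g) = fa_sub (fa_mult h f) (fa_mult h g)"
  by (auto simp: fa_mult_def fa_sub_def sum_subtractf algebra_simps)
lemma fa_mult_smult_left: "fa_mult (fa_smult c f) g = fa_smult c (fa_mult f g)"
  by (auto simp: fa_mult_def fa_smult_def sum_distrib_left algebra_simps)
lemma fa_mult_smult_right: "fa_mult f (fa_smult c g) = fa_smult c (fa_mult f g)"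
  by (auto simp: fa_mult_def fa_smult_def sum_distrib_left algebra_simps)

lemma fa_one_left: "fa_mult fa_one f = f"
proof
  fix w :: "bool list"
  have "fa_mult fa_one f w = (\<Sum>i\<le>length w. if i = 0 then f w else 0)"
    unfolding fa_mult_def fa_one_def word_def
    by (rule sum.cong) auto
  then show "fa_mult fa_one f w = f w" by simp
qed

lemma fa_one_right: "fa_mult f fa_one = f"
proof
  fix w :: "bool list"
  have "fa_mult f fa_one w = (\<Sum>i\<le>length w. if i = length w then f w else 0)"
    unfolding fa_mult_def fa_one_def word_def
    by (rule sum.cong) auto
  then show "fa_mult f fa_one w = f w" by simp
qed

lemma fin_supp_add: "fin_supp f \<Longrightarrow> fin_supp g \<Longrightarrow> fin_supp (fa_add f g)"
  unfolding fin_supp_def fa_add_def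
  by (rule finite_subset[of _ "{w. f w \<noteq> 0} \<union> {w. g w \<noteq> 0}"]) auto
lemma fin_supp_sub: "fin_supp f \<Longrightarrow> fin_supp g \<Longrightarrow> fin_supp (fa_sub f g)"
  unfolding fin_supp_def fa_sub_def
  by (rule finite_subset[of _ "{w. f w \<noteq> 0} \<union> {w. g w \<noteq> 0}"]) auto
lemma fin_supp_smult: "fin_supp f \<Longrightarrow> fin_supp (fa_smult c f)"
  unfolding fin_supp_def fa_smult_def
  by (rule finite_subset[of _ "{w. f w \<noteq> 0}"]) auto
lemma fin_supp_word: "fin_supp (word u)"
  unfolding fin_supp_def word_def by simp
lemma fin_supp_zero: "fin_supp (\<lambda>w. 0)"
  unfolding fin_supp_def by simp
lemma fin_supp_mult: "fin_supp f \<Longrightarrow> fin_supp g \<Longrightarrow> fin_supp (fa_mult f g)"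
  unfolding fin_supp_def
proof -
  assume A: "finite {w. f w \<noteq> 0}" "finite {w. g w \<noteq> 0}"
  have "{w. fa_mult f g w \<noteq> 0} \<subseteq> (\<lambda>(u,v). u @ v) ` ({w. f w \<noteq> 0} \<times> {w. g w \<noteq> 0})"
  proof
    fix w assume "w \<in> {w. fa_mult f g w \<noteq> 0}"
    then obtain i where "f (take i w) * g (drop i w) \<noteq> 0"
      unfolding fa_mult_def by (auto elim: sum.not_neutral_contains_not_neutral)
    then show "w \<in> (\<lambda>(u,v). u @ v) ` ({w. f w \<noteq> 0} \<times> {w. g w \<noteq> 0})"
      by (auto intro!: image_eqI[of _ _ "(take i w, drop i w)"])
  qed
  then show "finite {w. fa_mult f g w \<noteq> 0}"
    using A by (auto intro: finite_subset)
qed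

lemma fin_supp_one: "fin_supp fa_one" unfolding fa_one_def by (rule fin_supp_word)

lemma ideal_fin_supp: "x \<in> hw_ideal \<Longrightarrow> fin_supp x"
  by (induction rule: hw_ideal.induct)
     (auto simp: hw_rel_def gen_p_def gen_q_def intro!: fin_supp_sub fin_supp_mult fin_supp_word
        fin_supp_smult fin_supp_one fin_supp_zero fin_supp_add)

lemma ideal_smult: "x \<in> hw_ideal \<Longrightarrow> fa_smult c x \<in> hw_ideal"
proof -
  assume "x \<in> hw_ideal"
  then have "fa_mult (fa_smult c fa_one) x \<in> hw_ideal"
    by (intro hw_ideal.lmult fin_supp_smult fin_supp_one)
  then show ?thesis by (simp add: fa_mult_smult_left fa_one_left)
qed

lemma ideal_sub: "x \<in> hw_ideal \<Longrightarrow> y \<in> hw_ideal \<Longrightarrow> fa_sub x y \<in> hw_ideal"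
proof -
  assume "x \<in> hw_ideal" "y \<in> hw_ideal"
  then have "fa_add x (fa_smult (-1) y) \<in> hw_ideal"
    by (intro hw_ideal.add ideal_smult)
  moreover have "fa_add x (fa_smult (-1) y) = fa_sub x y"
    by (auto simp: fa_add_def fa_smult_def fa_sub_def)
  ultimately show ?thesis by simp
qed

definition hwR :: "fa \<Rightarrow> fa \<Rightarrow> bool" where
  "hwR x y \<longleftrightarrow> fin_supp x \<and> fin_supp y \<and> fa_sub x y \<in> hw_ideal"

lemma sub_self: "fa_sub x x = (\<lambda>w. 0)" by (simp add: fa_sub_def)

lemma hwR_refl: "fin_supp x \<Longrightarrow> hwR x x"
  by (simp add: hwR_def sub_self hw_ideal.zero)

lemma hwR_eqI: "fin_supp x \<Longrightarrow> x = y \<Longrightarrow> hwR x y"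
  by (simp add: hwR_refl)

lemma part_equivp_hwR: "part_equivp hwR"
proof (rule part_equivpI)
  show "\<exists>x. hwR x x" using hwR_refl fin_supp_zero by blast
  show "symp hwR"
  proof (rule sympI)
    fix x y assume "hwR x y"
    then have "fa_smult (-1) (fa_sub x y) \<in> hw_ideal" "fin_supp x" "fin_supp y"
      by (auto simp: hwR_def intro: ideal_smult)
    moreover have "fa_smult (-1) (fa_sub x y) = fa_sub y x"
      by (auto simp: fa_smult_def fa_sub_def)
    ultimately show "hwR y x" by (simp add: hwR_def sub_self hw_ideal.zero)
  qed
  show "transp hwR"
  proof (rule transpI)
    fix x y z assume "hwR x y" "hwR y z"
    then have "fa_add (fa_sub x y) (fa_sub y z) \<in> hw_ideal" "fin_supp x" "fin_supp z"
      by (auto simp: hwR_def intro: hw_ideal.add)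
    moreover have "fa_add (fa_sub x y) (fa_sub y z) = fa_sub x z"
      by (auto simp: fa_add_def fa_sub_def)
    ultimately show "hwR x z" by (simp add: hwR_def sub_self hw_ideal.zero)
  qed
qed

quotient_type hw = fa / partial: hwR
  by (rule part_equivp_hwR)

instantiation hw :: "{ring, monoid_mult}"
begin
lift_definition zero_hw :: hw is "\<lambda>w. 0" by (rule hwR_refl[OF fin_supp_zero])
lift_definition one_hw :: hw is fa_one by (rule hwR_refl[OF fin_supp_one])
lift_definition plus_hw :: "hw \<Rightarrow> hw \<Rightarrow> hw" is fa_add
proof -
  fix x x' y y' assume "hwR x x'" "hwR y y'"
  moreover have "fa_sub (fa_add x y) (fa_add x' y') = fa_add (fa_sub x x') (fa_sub y y')"
    by (auto simp: fa_add_def fa_sub_def)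
  ultimately show "hwR (fa_add x y) (fa_add x' y')"
    by (auto simp: hwR_def intro: fin_supp_add hw_ideal.add)
qed
lift_definition minus_hw :: "hw \<Rightarrow> hw \<Rightarrow> hw" is fa_sub
proof -
  fix x x' y y' assume "hwR x x'" "hwR y y'"
  moreover have "fa_sub (fa_sub x y) (fa_sub x' y') = fa_sub (fa_sub x x') (fa_sub y y')"
    by (auto simp: fa_sub_def)
  ultimately show "hwR (fa_sub x y) (fa_sub x' y')"
    by (auto simp: hwR_def intro: fin_supp_sub ideal_sub)
qed
lift_definition uminus_hw :: "hw \<Rightarrow> hw" is "fa_smult (-1)"
proof -
  fix x x' assume "hwR x x'"
  moreover have "fa_sub (fa_smult (-1) x) (fa_smult (-1) x') = fa_smult (-1) (fa_sub x x')"
    by (auto simp: fa_sub_def fa_smult_def)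
  ultimately show "hwR (fa_smult (-1) x) (fa_smult (-1) x')"
    by (auto simp: hwR_def intro: fin_supp_smult ideal_smult)
qed
lift_definition times_hw :: "hw \<Rightarrow> hw \<Rightarrow> hw" is fa_mult
proof -
  fix x x' y y' assume A: "hwR x x'" "hwR y y'"
  have "fa_sub (fa_mult x y) (fa_mult x' y') = fa_add (fa_mult (fa_sub x x') y) (fa_mult x' (fa_sub y y'))"
    by (simp only: fa_mult_sub_left fa_mult_sub_right) (auto simp: fa_sub_def fa_add_def)
  moreover have "fa_mult (fa_sub x x') y \<in> hw_ideal"
    using A by (intro hw_ideal.rmult) (auto simp: hwR_def)
  moreover have "fa_mult x' (fa_sub y y') \<in> hw_ideal"
    using A by (intro hw_ideal.lmult) (auto simp: hwR_def)
  ultimately show "hwR (fa_mult x y) (fa_mult x' y')"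
    using A by (auto simp: hwR_def intro!: fin_supp_mult hw_ideal.add)
qed
instance
proof
  fix a b c :: hw
  show "a * b * c = a * (b * c)"
    by transfer (rule hwR_eqI, auto simp: hwR_def intro!: fin_supp_mult fin_supp_add fin_supp_sub fin_supp_smult fin_supp_zero fin_supp_one, auto simp: fa_mult_assoc)
  show "1 * a = a"
    by transfer (rule hwR_eqI, auto simp: hwR_def intro!: fin_supp_mult fin_supp_add fin_supp_sub fin_supp_smult fin_supp_zero fin_supp_one, auto simp: fa_one_left)
  show "a * 1 = a"
    by transfer (rule hwR_eqI, auto simp: hwR_def intro!: fin_supp_mult fin_supp_add fin_supp_sub fin_supp_smult fin_supp_zero fin_supp_one, auto simp: fa_one_right)
  show "(a + b) * c = a * c + b * c"
    by transfer (rule hwR_eqI, auto simp: hwR_def intro!: fin_supp_mult fin_supp_add fin_supp_sub fin_supp_smult fin_supp_zero fin_supp_one, auto simp: fa_mult_add_left)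
  show "a * (b + c) = a * b + a * c"
    by transfer (rule hwR_eqI, auto simp: hwR_def intro!: fin_supp_mult fin_supp_add fin_supp_sub fin_supp_smult fin_supp_zero fin_supp_one, auto simp: fa_mult_add_right)
  show "a + b + c = a + (b + c)"
    by transfer (rule hwR_eqI, auto simp: hwR_def intro!: fin_supp_mult fin_supp_add fin_supp_sub fin_supp_smult fin_supp_zero fin_supp_one, auto simp: fa_add_def)
  show "a + b = b + a"
    by transfer (rule hwR_eqI, auto simp: hwR_def intro!: fin_supp_mult fin_supp_add fin_supp_sub fin_supp_smult fin_supp_zero fin_supp_one, auto simp: fa_add_def)
  show "0 + a = a"
    by transfer (auto intro!: hwR_eqI simp: fa_add_def hwR_def sub_self hw_ideal.zero)
  show "- a + a = 0"
    by transfer (rule hwR_eqI, auto simp: hwR_def intro!: fin_supp_mult fin_supp_add fin_supp_sub fin_supp_smult fin_supp_zero fin_supp_one, auto simp: fa_add_def fa_smult_def)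
  show "a - b = a + - b"
    by transfer (rule hwR_eqI, auto simp: hwR_def intro!: fin_supp_mult fin_supp_add fin_supp_sub fin_supp_smult fin_supp_zero fin_supp_one, auto simp: fa_add_def fa_sub_def fa_smult_def)
qed
end



lemma fa_pow_Suc: "fa_pow f (Suc n) = fa_mult f (fa_pow f n)"
  by (simp add: fa_pow_def)
lemma fa_pow_0: "fa_pow f 0 = fa_one"
  by (simp add: fa_pow_def)
lemma fin_supp_pow: "fin_supp f \<Longrightarrow> fin_supp (fa_pow f n)"
  by (induction n) (auto simp: fa_pow_Suc fa_pow_0 fin_supp_one fin_supp_mult)

lemma abs_mult: "fin_supp x \<Longrightarrow> fin_supp y \<Longrightarrow> abs_hw (fa_mult x y) = abs_hw x * abs_hw y"
  by (simp add: times_hw.abs_eq hwR_refl)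

lemma abs_pow: "fin_supp f \<Longrightarrow> abs_hw (fa_pow f n) = abs_hw f ^ n"
  by (induction n) (auto simp: fa_pow_Suc fa_pow_0 one_hw.abs_eq abs_mult fin_supp_pow)

lemma abs_eq_hwR: "fin_supp x \<Longrightarrow> fin_supp y \<Longrightarrow> abs_hw x = abs_hw y \<Longrightarrow> hwR x y"
  using Quotient3_rel[OF Quotient3_hw] hwR_refl by blast

lemma scal_central: "abs_hw (fa_smult a fa_one) * x = x * abs_hw (fa_smult a fa_one)"
proof -
  have "hwR (fa_smult a fa_one) (fa_smult a fa_one)"
    by (rule hwR_refl) (intro fin_supp_smult fin_supp_one)
  then show ?thesis
    apply (induction x rule: hw.abs_induct)
    apply (simp add: times_hw.abs_eq)
    apply (simp add: fa_mult_smult_left fa_mult_smult_right fa_one_left fa_one_right)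
    done
qed

lemma fs_p: "fin_supp gen_p" by (simp add: gen_p_def fin_supp_word)
lemma fs_q: "fin_supp gen_q" by (simp add: gen_q_def fin_supp_word)

lemma hw_relation:
  "abs_hw gen_q * abs_hw gen_p - abs_hw gen_p * abs_hw gen_q = abs_hw (fa_smult \<i> fa_one)"
proof -
  have fs: "fin_supp (fa_sub (fa_mult gen_q gen_p) (fa_mult gen_p gen_q))" "fin_supp (fa_smult \<i> fa_one)"
    by (auto intro!: fin_supp_sub fin_supp_mult fin_supp_smult fin_supp_one fs_p fs_q)
  have "hwR (fa_sub (fa_mult gen_q gen_p) (fa_mult gen_p gen_q)) (fa_smult \<i> fa_one)"
    using fs hw_ideal.gen by (simp add: hwR_def hw_rel_def)
  then have "abs_hw (fa_sub (fa_mult gen_q gen_p) (fa_mult gen_p gen_q)) = abs_hw (fa_smult \<i> fa_one)"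
    using Quotient3_rel[OF Quotient3_hw] by blast
  moreover have "abs_hw (fa_sub (fa_mult gen_q gen_p) (fa_mult gen_p gen_q)) =
      abs_hw gen_q * abs_hw gen_p - abs_hw gen_p * abs_hw gen_q"
    by (simp add: minus_hw.abs_eq[symmetric] hwR_refl fin_supp_mult fs_p fs_q abs_mult)
  ultimately show ?thesis by simp
qed

theorem corollary2p6:
  fixes k n :: nat
  assumes "k \<le> n"
  shows "hw_eq (fa_mult (fa_mult (fa_pow gen_q k) (fa_pow gen_p n)) (fa_pow gen_q (n - k)))
               (fa_mult (fa_mult (fa_pow gen_p (n - k)) (fa_pow gen_q n)) (fa_pow gen_p k))"
proof -
  have eq: "abs_hw gen_q ^ k * abs_hw gen_p ^ n * abs_hw gen_q ^ (n - k) =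
      abs_hw gen_p ^ (n - k) * abs_hw gen_q ^ n * abs_hw gen_p ^ k"
    by (rule weyl_abstract[OF hw_relation scal_central scal_central assms])
  have "hwR (fa_mult (fa_mult (fa_pow gen_q k) (fa_pow gen_p n)) (fa_pow gen_q (n - k)))
               (fa_mult (fa_mult (fa_pow gen_p (n - k)) (fa_pow gen_q n)) (fa_pow gen_p k))"
    apply (rule abs_eq_hwR)
    apply (auto intro!: fin_supp_mult fin_supp_pow fs_p fs_q)
    using eq by (simp add: abs_mult abs_pow fin_supp_mult fin_supp_pow fs_p fs_q)
  then show ?thesis by (simp add: hwR_def hw_eq_def)
qed

end
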